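(* Let $B(z)=\frac{1-\sqrt{1-4z}}{2z}=\sum_{n\ge0}\frac{1}{n+1}\binom{2n}{n}z^n$ be the generating function of binary trees counted by the number of inner nodes. Then \[ B(z)=1+\frac{z}{1-2z}\,B\Big(\frac{z^2}{(1-2z)^2}\Big). \]
   Context: A binary tree is either a leaf $\square$ or a root (an inner node) together with an ordered pair (left, right) of subtrees which are binary trees. The size of a binary tree is its number of inner nodes. *)

theory Defs
  imports "HOL-Computational_Algebra.Formal_Power_Series"
begin

definition B :: "real fps" where
  "B = Abs_fps (\<lambda>n. real (2 * n choose n) / real (n + 1))"

end

theory Submission
  imports Defs
begin
unbundle fps_syntax

lemma uniq:
  fixes F G :: "real fps"
  assumes F: "F = 1 + fps_X * F^2" and G: "G = 1 + fps_X * G^2"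
  shows "F = G"
proof -
  have "F $ n = G $ n" for n
  proof (induction n rule: less_induct)
    case (less n)
    show ?case
    proof (cases n)
      case 0
      have "F $ 0 = 1" by (subst F) simp
      moreover have "G $ 0 = 1" by (subst G) simp
      ultimately show ?thesis using 0 by simp
    next
      case (Suc m)
      have "F $ n = (F^2) $ m" using Suc by (subst F) simp
      also have "\<dots> = (\<Sum>i=0..m. F$i * F$(m-i))" by (simp add: power2_eq_square fps_mult_nth)
      also have "\<dots> = (\<Sum>i=0..m. G$i * G$(m-i))"
        by (rule sum.cong) (use less Suc in auto)
      also have "\<dots> = (G^2) $ m" by (simp add: power2_eq_square fps_mult_nth)
      also have "\<dots> = G $ n" using Suc by (subst (2) G) simp
      finally show ?thesis .
    qed
  qed
  then show ?thesis by (simp add: fps_eq_iff)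
qed

lemma binom_step: "real (2*(k+1) choose (k+1)) * (k+1) = 2*(2*k+1) * real (2*k choose k)"
proof -
  have e1: "Suc k * (Suc (2*k+1) choose Suc k) = Suc (2*k+1) * ((2*k+1) choose k)"
    by (rule Suc_times_binomial)
  have e2: "Suc k * (Suc (2*k) choose Suc k) = Suc (2*k) * ((2*k) choose k)"
    by (rule Suc_times_binomial)
  have sy: "(2*k+1) choose k = (2*k+1) choose (Suc k)"
    using binomial_symmetric[of k "2*k+1"] by simp
  have h1: "Suc (2*k+1) = 2*(k+1)" "Suc k = k+1" "Suc (2*k) = 2*k+1" by simp_all
  define E where "E = 2*(k+1) choose (k+1)"
  define D where "D = (2*k+1) choose (k+1)"
  define C where "C = 2*k choose k"
  have a: "(k+1) * E = 2*(k+1) * D" using e1 unfolding E_def D_def sy h1 .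
  have b: "(k+1) * D = (2*k+1) * C" using e2 unfolding D_def C_def h1 .
  have "(k+1) * E = 2 * ((k+1) * D)" using a by simp
  also have "\<dots> = 2*(2*k+1) * C" using b by simp
  finally have "E * (k+1) = 2*(2*k+1) * C" by (simp add: mult.commute)
  then have "real (E * (k+1)) = real (2*(2*k+1) * C)" by (rule arg_cong)
  then show ?thesis unfolding E_def C_def by (simp add: algebra_simps del: binomial_Suc_Suc)
qed

lemma gch_step: "(a::real) gchoose (Suc k) = (a gchoose k) * (a - k) / (k+1)"
proof -
  have "of_nat (Suc k) * (a gchoose Suc k) = (a - of_nat k) * (a gchoose k)"
    using gbinomial_absorption[of k a] gbinomial_absorb_comp[of a k] by simp
  then show ?thesis by (simp add: field_simps)
qed

definition S :: "real fps" where "S = Abs_fps (\<lambda>n. ((1/2) gchoose n) * (-4)^n)"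

lemma S_coeff: "((1/2::real) gchoose (Suc k)) * (-4)^(Suc k) = - 2 * (real (2 * k choose k) / real (k + 1))"
proof (induction k)
  case 0 then show ?case by simp
next
  case (Suc k)
  define c where "c = real (2 * k choose k)"
  define e where "e = real (2*(k+1) choose (k+1))"
  have ec: "e * (k+1) = 2*(2*k+1) * c" unfolding e_def c_def using binom_step[of k] by (simp add: algebra_simps del: binomial_Suc_Suc)
  have "((1/2::real) gchoose (Suc (Suc k))) * (-4)^(Suc (Suc k))
     = (((1/2::real) gchoose (Suc k)) * (-4)^(Suc k)) * ((1/2 - (k+1)) * (-4) / (k+2))"
    by (subst gch_step) (simp add: field_simps)
  also have "\<dots> = - 2 * (c / (k + 1)) * ((1/2 - (k+1)) * (-4) / (k+2))"
    by (simp only: Suc c_def)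
  also have "\<dots> = - 2 * (e / (k+2))"
  proof -
    have p1: "real k + 1 \<noteq> 0" "real k + 2 \<noteq> 0" by linarith+
    have q: "(1/2 - (real k+1))*(-4) = 2*(2*real k+1)" by (simp add: algebra_simps)
    have r: "e = c*(2*(2*real k+1))/(real k+1)" using ec p1 by (simp add: field_simps)
    show ?thesis unfolding q r by (simp add: times_divide_times_eq divide_divide_eq_left mult.assoc) (simp add: algebra_simps)
  qed
  also have "\<dots> = - 2 * (real (2 * Suc k choose Suc k) / real (Suc k + 1))"
    by (simp add: e_def)
  finally show ?case .
qed

lemma S_sq: "S^2 = 1 - 4 * fps_X"
proof -
  have "(S^2) $ n = (1 - 4 * fps_X) $ n" for n
  proof -
    have "(S^2) $ n = (\<Sum>i=0..n. ((1/2) gchoose i) * ((1/2) gchoose (n-i)) * (-4)^n)"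
      unfolding power2_eq_square fps_mult_nth
      by (rule sum.cong) (auto simp: S_def power_add[symmetric])
    also have "\<dots> = (-4)^n * ((1/2 + 1/2) gchoose n)"
      by (subst gbinomial_Vandermonde[symmetric]) (simp add: sum_distrib_left algebra_simps)
    also have "\<dots> = (-4)^n * (fps_binomial 1 $ n)" by simp
    also have "\<dots> = (1 - 4 * fps_X) $ n"
      unfolding fps_binomial_1 by (cases n) (auto simp: fps_numeral_nth)
    finally show ?thesis .
  qed
  then show ?thesis by (simp add: fps_eq_iff)
qed

lemma S_B: "1 - S = 2 * fps_X * B"
proof -
  have "(1 - S) $ n = (2 * fps_X * B) $ n" for n
  proof (cases n)
    case 0 then show ?thesis by (simp add: S_def)
  next
    case (Suc k)
    have "(2 * fps_X * B) $ n = 2 * (B $ k)"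
      using Suc by (simp add: fps_numeral_fps_const mult.assoc)
    then show ?thesis using Suc S_coeff[of k] by (simp add: S_def B_def)
  qed
  then show ?thesis by (simp add: fps_eq_iff)
qed

lemma B_eq: "B = 1 + fps_X * B^2"
proof -
  have "4 * fps_X * (fps_X * B^2) = (2 * fps_X * B)^2" by (simp add: power2_eq_square algebra_simps)
  also have "\<dots> = (1 - S)^2" by (simp add: S_B)
  also have "\<dots> = 1 - 2 * S + S^2" by (simp add: power2_eq_square algebra_simps)
  also have "\<dots> = 2 * (1 - S) - 4 * fps_X" by (simp add: S_sq)
  also have "\<dots> = 4 * fps_X * (B - 1)" by (simp add: S_B algebra_simps)
  finally have "fps_X * (4 * (fps_X * B^2)) = fps_X * (4 * (B - 1))" by (simp add: algebra_simps)
  then have "4 * (fps_X * B^2) = 4 * (B - 1)" by (simp add: fps_X_neq_zero)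
  then have "fps_X * B^2 = B - 1" by (simp only: mult_cancel_left) simp
  then show ?thesis by simp
qed

theorem proposition1:
  shows "B = 1 + (fps_X / (1 - 2 * fps_X)) * (B oo (fps_X ^ 2 / (1 - 2 * fps_X) ^ 2))"
proof -
  define w :: "real fps" where "w = inverse (1 - 2 * fps_X)"
  have w0: "(1 - 2 * fps_X :: real fps) $ 0 \<noteq> 0" by simp
  have hw: "(1 - 2 * fps_X) * w = 1" unfolding w_def using w0 by (rule inverse_mult_eq_1')
  define u where "u = fps_X * w"
  have u_eq: "fps_X / (1 - 2 * fps_X) = u"
    unfolding u_def w_def using w0 by (simp add: fps_divide_unit)
  have v_eq: "fps_X ^ 2 / (1 - 2 * fps_X) ^ 2 = u ^ 2"
    unfolding u_def w_def using w0 by (simp add: fps_divide_unit power_mult_distrib fps_inverse_power)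
  have v0: "(u^2) $ 0 = 0" unfolding u_def by (simp add: power2_eq_square)
  define D where "D = B oo u^2"
  have D_eq: "D = 1 + u^2 * D^2"
  proof -
    have "D = (1 + fps_X * B^2) oo u^2" unfolding D_def by (subst B_eq) simp
    also have "\<dots> = 1 + u^2 * D^2"
      using v0 by (simp add: fps_compose_add_distrib fps_compose_mult_distrib fps_compose_power D_def)
    finally show ?thesis .
  qed
  have ux: "u = fps_X + 2 * fps_X * u"
  proof -
    have "u = ((1 - 2 * fps_X) * w) * fps_X + 2 * fps_X * u" unfolding u_def by (simp add: algebra_simps)
    then show ?thesis using hw by simp
  qed
  define C where "C = 1 + u * D"
  have "fps_X * C^2 = fps_X * (1 + 2 * u * D + u^2 * D^2)"
    unfolding C_def by (simp add: power2_eq_square algebra_simps)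
  also have "\<dots> = fps_X * (1 + 2 * u * D + (D - 1))"
  proof -
    have "u^2 * D^2 = D - 1" by (metis D_eq add_diff_cancel_left')
    then show ?thesis by simp
  qed
  also have "\<dots> = fps_X * (2 * u * D + D)" by (simp add: algebra_simps)
  also have "\<dots> = (fps_X + 2 * fps_X * u) * D" by (simp add: algebra_simps)
  also have "\<dots> = u * D" using ux by simp
  finally have "C = 1 + fps_X * C^2" unfolding C_def by simp
  then have "B = C" using uniq B_eq by blast
  then show ?thesis unfolding C_def D_def u_eq v_eq .
qed

end
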